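(* Let $G=(V,D,B)$ be a simple mixed graph. Then the set of covariance matrices $$\mathcal{M}_G=\{(I-\Lambda)^{-T}\Omega(I-\Lambda)^{-1}:\ \Lambda\in\mathbb{R}^D_{\mathrm{reg}},\ \Omega\in \mathit{PD}(B)\}$$ has dimension $\dim(\mathcal{M}_G)=|V|+|D|+|B|$.
   Context: A mixed graph with vertex set $V$ (finite) is a triple $G=(V,D,B)$, where $D$ is a set of ordered pairs $(i,j)$ with $i\neq j$ (directed edges $i\to j$) and $B$ is a set of unordered pairs $\{i,j\}$ with $i\ne j$ (bidirected edges $i\leftrightarrow j$). $G$ is simple if any two distinct nodes are joined by at most one edge of any type (so $i\to j$ and $j\to i$ cannot both be present, and a bidirected edge cannot coexist with a directed edge between the same pair); directed cycles of length $\ge 3$ are allowed. $\mathbb{R}^D$ is the set of real $V\times V$ matrices $\Lambda=(\lambda_{ij})$ with $\lambda_{ij}=0$ whenever $(i,j)\notin D$; $\mathbb{R}^D_{\mathrm{reg}}$ is the subset with $I-\Lambda$ invertible. $\mathit{PD}(B)$ is the set of positive definite symmetric $V\times V$ matrices $\Omega=(\omega_{ij})$ with $\omega_{ij}=0$ whenever $i\neq j$ and $\{i,j\}\notin B$. Dimension is the dimension of $\mathcal{M}_G$ as a (semialgebraic) subset of the space of symmetric $V\times V$ matrices. *)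

theory Defs
  imports "HOL-Analysis.Analysis"
begin

text \<open>Vertex set V is a finite type 'v. Directed edges D: ordered pairs; bidirected
edges B: unordered pairs, represented as two-element sets.\<close>

definition simple_mixed_graph :: "('v \<times> 'v) set \<Rightarrow> 'v set set \<Rightarrow> bool" where
  "simple_mixed_graph D B \<longleftrightarrow>
     (\<forall>(i,j)\<in>D. i \<noteq> j \<and> (j,i) \<notin> D \<and> {i,j} \<notin> B) \<and>
     (\<forall>e\<in>B. \<exists>i j. i \<noteq> j \<and> e = {i,j})"

definition RD :: "('v::finite \<times> 'v) set \<Rightarrow> (real^'v^'v) set" where
  "RD D = {L. \<forall>i j. (i,j) \<notin> D \<longrightarrow> L$i$j = 0}"

definition RD_reg :: "('v::finite \<times> 'v) set \<Rightarrow> (real^'v^'v) set" where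
  "RD_reg D = {L \<in> RD D. invertible (mat 1 - L)}"

definition PD :: "'v::finite set set \<Rightarrow> (real^'v^'v) set" where
  "PD B = {W. transpose W = W \<and> (\<forall>x. x \<noteq> 0 \<longrightarrow> x \<bullet> (W *v x) > 0) \<and>
              (\<forall>i j. i \<noteq> j \<and> {i,j} \<notin> B \<longrightarrow> W$i$j = 0)}"

definition model :: "('v::finite \<times> 'v) set \<Rightarrow> 'v set set \<Rightarrow> (real^'v^'v) set" where
  "model D B = {transpose (matrix_inv (mat 1 - L)) ** W ** matrix_inv (mat 1 - L) | L W.
                 L \<in> RD_reg D \<and> W \<in> PD B}"

text \<open>Dimension of a (semialgebraic) set of matrices, in the o-minimal / semialgebraic
sense: the largest number of coordinates such that the coordinate projection onto them
has nonempty interior.\<close>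

definition proj_has_interior :: "(real^'v^'v) set \<Rightarrow> ('v \<times> 'v) set \<Rightarrow> bool" where
  "proj_has_interior S I \<longleftrightarrow>
     (\<exists>M0\<in>S. \<exists>e>0. \<forall>f :: 'v \<times> 'v \<Rightarrow> real.
        (\<forall>k\<in>I. \<bar>f k - M0 $ fst k $ snd k\<bar> < e) \<longrightarrow>
        (\<exists>M\<in>S. \<forall>k\<in>I. M $ fst k $ snd k = f k))"

definition sa_dim :: "(real^'v::finite^'v) set \<Rightarrow> nat" where
  "sa_dim S = (GREATEST d. \<exists>I. card I = d \<and> proj_has_interior S I)"

end

theory Submission
  imports Defs
begin


lemma vec2_has_derivative:
  fixes f :: "'a::real_normed_vector \<Rightarrow> real^'n^'m"
  assumes "\<And>i j. ((\<lambda>x. f x $ i $ j) has_derivative (\<lambda>h. f' h $ i $ j)) (at a within S)"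
  shows "(f has_derivative f') (at a within S)"
proof (subst has_derivative_componentwise_within, intro ballI)
  fix b :: "real^'n^'m" assume "b \<in> Basis"
  then obtain i u where b: "b = axis i u" and u: "u \<in> Basis" by (auto simp: Basis_vec_def)
  then obtain j where u': "u = axis j 1" by (auto simp: Basis_vec_def)
  show "((\<lambda>x. f x \<bullet> b) has_derivative (\<lambda>x. f' x \<bullet> b)) (at a within S)"
    using assms[of i j] by (simp add: b u' inner_axis)
qed

lemma vec2_differentiable:
  fixes f :: "'a::real_normed_vector \<Rightarrow> real^'n^'m"
  assumes "\<And>i j. (\<lambda>x. f x $ i $ j) differentiable (at a within S)"
  shows "f differentiable (at a within S)"
proof (subst differentiable_componentwise_within, intro ballI)
  fix b :: "real^'n^'m" assume "b \<in> Basis"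
  then obtain i u where b: "b = axis i u" and u: "u \<in> Basis" by (auto simp: Basis_vec_def)
  then obtain j where u': "u = axis j 1" by (auto simp: Basis_vec_def)
  show "(\<lambda>x. f x \<bullet> b) differentiable (at a within S)"
    using assms[of i j] by (simp add: b u' inner_axis)
qed

lemma comp2_has_derivative:
  fixes f :: "'a::real_normed_vector \<Rightarrow> real^'n^'m"
  assumes "(f has_derivative f') F"
  shows "((\<lambda>x. f x $ i $ j) has_derivative (\<lambda>h. f' h $ i $ j)) F"
proof -
  have "bounded_linear (\<lambda>M::real^'n^'m. M $ i $ j)"
    using bounded_linear_compose[OF bounded_linear_vec_nth bounded_linear_vec_nth] .
  from bounded_linear.has_derivative[OF this assms] show ?thesis .
qed

lemma mm_has_derivative:
  fixes f :: "'a::real_normed_vector \<Rightarrow> real^'k^'m" and g :: "'a \<Rightarrow> real^'n^'k"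
  assumes f: "(f has_derivative f') (at a within S)" and g: "(g has_derivative g') (at a within S)"
  shows "((\<lambda>x. f x ** g x) has_derivative (\<lambda>h. f a ** g' h + f' h ** g a)) (at a within S)"
proof (rule vec2_has_derivative)
  fix i j
  have "((\<lambda>x. \<Sum>k\<in>UNIV. f x $ i $ k * g x $ k $ j) has_derivative
        (\<lambda>h. \<Sum>k\<in>UNIV. f a $ i $ k * g' h $ k $ j + f' h $ i $ k * g a $ k $ j)) (at a within S)"
    by (intro has_derivative_sum has_derivative_mult comp2_has_derivative f g)
  then show "((\<lambda>x. (f x ** g x) $ i $ j) has_derivative (\<lambda>h. (f a ** g' h + f' h ** g a) $ i $ j)) (at a within S)"
    by (simp add: matrix_matrix_mult_def sum.distrib)
qed

lemma transpose_has_derivative: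
  fixes f :: "'a::real_normed_vector \<Rightarrow> real^'n^'m"
  assumes f: "(f has_derivative f') (at a within S)"
  shows "((\<lambda>x. transpose (f x)) has_derivative (\<lambda>h. transpose (f' h))) (at a within S)"
  by (rule vec2_has_derivative) (simp add: transpose_def comp2_has_derivative[OF f])

definition posn :: "('v \<times> 'v) set \<Rightarrow> ('v \<Rightarrow> nat) \<Rightarrow> 'v \<Rightarrow> 'v \<Rightarrow> 'v \<times> 'v" where
  "posn D rk i j = (if (i,j) \<in> D then (j,i) else if (j,i) \<in> D then (i,j)
                    else if rk i \<le> rk j then (i,j) else (j,i))"

definition Sg :: "('v::finite \<times> 'v) set \<Rightarrow> ('v \<Rightarrow> nat) \<Rightarrow> real^'v^'v \<Rightarrow> real^'v^'v" where
  "Sg D rk X = (\<chi> i j. X $ fst (posn D rk i j) $ snd (posn D rk i j))"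

definition Lam :: "('v::finite \<times> 'v) set \<Rightarrow> real^'v^'v \<Rightarrow> real^'v^'v" where
  "Lam D X = (\<chi> i j. if (i,j) \<in> D then X $ i $ j else 0)"

definition Om :: "('v::finite \<times> 'v) set \<Rightarrow> ('v \<Rightarrow> nat) \<Rightarrow> real^'v^'v \<Rightarrow> real^'v^'v" where
  "Om D rk X = transpose (mat 1 - Lam D X) ** Sg D rk X ** (mat 1 - Lam D X)"

definition Cset :: "('v \<times> 'v) set \<Rightarrow> 'v set set \<Rightarrow> ('v \<Rightarrow> nat) \<Rightarrow> ('v \<times> 'v) set" where
  "Cset D B rk = D \<union> {(i,j). i \<noteq> j \<and> (i,j) \<notin> D \<and> (j,i) \<notin> D \<and> {i,j} \<notin> B \<and> rk i < rk j}"

definition FF :: "('v::finite \<times> 'v) set \<Rightarrow> 'v set set \<Rightarrow> ('v \<Rightarrow> nat) \<Rightarrow> real^'v^'v \<Rightarrow> real^'v^'v" where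
  "FF D B rk X = (\<chi> i j. if (i,j) \<in> Cset D B rk then Om D rk X $ i $ j else X $ i $ j)"

definition Iset :: "('v \<times> 'v) set \<Rightarrow> 'v set set \<Rightarrow> ('v \<Rightarrow> nat) \<Rightarrow> ('v \<times> 'v) set" where
  "Iset D B rk = {(i,i) | i. True} \<union> {(j,i) | i j. (i,j) \<in> D} \<union> {(i,j). {i,j} \<in> B \<and> rk i < rk j}"

lemma Lam_deriv: "(Lam D has_derivative Lam D) (at a within S)"
proof (rule vec2_has_derivative)
  fix i j
  show "((\<lambda>x. Lam D x $ i $ j) has_derivative (\<lambda>h. Lam D h $ i $ j)) (at a within S)"
    by (cases "(i,j) \<in> D") (simp_all add: Lam_def comp2_has_derivative[OF has_derivative_ident])
qed

lemma Sg_deriv: "(Sg D rk has_derivative Sg D rk) (at a within S)"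
proof (rule vec2_has_derivative)
  fix i j
  show "((\<lambda>x. Sg D rk x $ i $ j) has_derivative (\<lambda>h. Sg D rk h $ i $ j)) (at a within S)"
    by (simp add: Sg_def comp2_has_derivative[OF has_derivative_ident])
qed

lemma A_deriv: "((\<lambda>x. mat 1 - Lam D x) has_derivative (\<lambda>h. - Lam D h)) (at a within S)"
  using has_derivative_diff[OF has_derivative_const Lam_deriv, of "mat 1" D a S] by simp

lemma Om_deriv_gen:
  "(Om D rk has_derivative (\<lambda>h. (transpose (mat 1 - Lam D a) ** Sg D rk a) ** (- Lam D h)
       + (transpose (mat 1 - Lam D a) ** Sg D rk h + transpose (- Lam D h) ** Sg D rk a) ** (mat 1 - Lam D a)))
     (at a within S)"
  unfolding Om_def
  by (intro mm_has_derivative transpose_has_derivative has_derivative_diff has_derivative_const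
        A_deriv Sg_deriv) 

lemma posn_cases: "posn D rk i j = (i,j) \<or> posn D rk i j = (j,i)"
  by (auto simp: posn_def)

lemma transpose_uminus: "transpose (- A) = - transpose (A::real^'n^'m)"
  by (simp add: transpose_def vec_eq_iff)

lemma Sg_mat1: fixes D :: "('v::finite \<times> 'v) set" shows "Sg D rk (mat 1) = mat 1"
proof -
  have "(mat 1 :: real^'v^'v) $ fst (posn D rk i j) $ snd (posn D rk i j) = (mat 1::real^'v^'v) $ i $ j" for i j :: 'v
    using posn_cases[of D rk i j] by (auto simp: mat_def)
  then show ?thesis by (simp add: Sg_def vec_eq_iff)
qed

lemma Lam_mat1: "\<forall>(i,j)\<in>D. i \<noteq> j \<Longrightarrow> Lam D (mat 1) = 0"
  by (auto simp: Lam_def vec_eq_iff mat_def)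

definition FF' :: "('v::finite \<times> 'v) set \<Rightarrow> 'v set set \<Rightarrow> ('v \<Rightarrow> nat) \<Rightarrow> real^'v^'v \<Rightarrow> real^'v^'v" where
  "FF' D B rk h = (\<chi> i j. if (i,j) \<in> Cset D B rk then (Sg D rk h - Lam D h - transpose (Lam D h)) $ i $ j else h $ i $ j)"

lemma Om_deriv0:
  assumes "\<forall>(i,j)\<in>D. i \<noteq> j"
  shows "(Om D rk has_derivative (\<lambda>h. Sg D rk h - Lam D h - transpose (Lam D h))) (at (mat 1) within S)"
  using Om_deriv_gen[of D rk "mat 1" S]
  by (simp add: Lam_mat1[OF assms] Sg_mat1 transpose_uminus matrix_mul_lid matrix_mul_rid
      algebra_simps)

lemma FF_deriv0:
  assumes "\<forall>(i,j)\<in>D. i \<noteq> j"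
  shows "(FF D B rk has_derivative FF' D B rk) (at (mat 1) within S)"
proof (rule vec2_has_derivative)
  fix i j
  show "((\<lambda>x. FF D B rk x $ i $ j) has_derivative (\<lambda>h. FF' D B rk h $ i $ j)) (at (mat 1) within S)"
    using comp2_has_derivative[OF Om_deriv0[OF assms, of rk S], where i=i and j=j]
    by (cases "(i,j) \<in> Cset D B rk") (simp_all add: FF_def FF'_def 
       comp2_has_derivative[OF has_derivative_ident])
qed

lemma FF_differentiable: "FF D B rk differentiable (at a within S)"
proof (rule vec2_differentiable)
  fix i j
  show "(\<lambda>x. FF D B rk x $ i $ j) differentiable (at a within S)"
    by (cases "(i,j) \<in> Cset D B rk") (auto simp: FF_def differentiable_def
       intro: comp2_has_derivative[OF has_derivative_ident] comp2_has_derivative[OF Om_deriv_gen])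
qed

lemma Om_continuous: "continuous (at a within S) (Om D rk)"
  using Om_deriv_gen has_derivative_continuous by blast

lemma FF'_zero:
  fixes D :: "('v::finite \<times> 'v) set"
  assumes sg: "simple_mixed_graph D B" and rk: "inj rk" and h0: "FF' D B rk h = 0"
  shows "h = 0"
proof -
  have comp: "(if (i,j) \<in> Cset D B rk then (Sg D rk h - Lam D h - transpose (Lam D h)) $ i $ j else h $ i $ j) = 0" for i j
    using h0 by (simp add: FF'_def vec_eq_iff)
  have D: "i \<noteq> j \<and> (j,i) \<notin> D \<and> {i,j} \<notin> B" if "(i,j) \<in> D" for i j
    using sg that by (auto simp: simple_mixed_graph_def)
  have nC: "h $ i $ j = 0" if "(i,j) \<notin> Cset D B rk" for i j
    using comp[of i j] that by simp
  have "h $ i $ j = 0" for i j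
  proof (cases "(i,j) \<in> Cset D B rk")
    case False then show ?thesis by (rule nC)
  next
    case True
    show ?thesis
    proof (cases "(i,j) \<in> D")
      case True
      have "(j,i) \<notin> Cset D B rk" using D[OF True] True by (auto simp: Cset_def)
      then have hj: "h $ j $ i = 0" by (rule nC)
      have "posn D rk i j = (j,i)" using True by (simp add: posn_def)
      moreover have "(j,i) \<notin> D" using D[OF True] by simp
      ultimately show ?thesis using comp[of i j] True hj \<open>(i,j) \<in> Cset D B rk\<close>
        by (simp add: Sg_def Lam_def transpose_def)
    next
      case False
      with True have c: "i \<noteq> j" "(j,i) \<notin> D" "rk i < rk j" by (auto simp: Cset_def)
      have "posn D rk i j = (i,j)" using False c by (simp add: posn_def)
      then show ?thesis using comp[of i j] True False c
        by (simp add: Sg_def Lam_def transpose_def)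
    qed
  qed
  then show ?thesis by (simp add: vec_eq_iff)
qed

lemma FF'_right_inverse:
  fixes D :: "('v::finite \<times> 'v) set"
  assumes sg: "simple_mixed_graph D B" and rk: "inj rk"
  shows "\<exists>g. bounded_linear g \<and> FF' D B rk \<circ> g = id"
proof -
  have irr: "\<forall>(i,j)\<in>D. i \<noteq> j" using sg by (auto simp: simple_mixed_graph_def)
  have bl: "bounded_linear (FF' D B rk)"
    using FF_deriv0[OF irr, of B rk UNIV] has_derivative_bounded_linear by blast
  then have lin: "linear (FF' D B rk)" by (rule bounded_linear.linear)
  have "inj (FF' D B rk)"
    using FF'_zero[OF sg rk] lin by (simp add: linear_injective_0)
  then have "surj (FF' D B rk)" using linear_injective_imp_surjective lin by blast
  then obtain g where "linear g" "FF' D B rk \<circ> g = id"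
    using linear_surjective_right_inverse lin by blast
  then show ?thesis using linear_conv_bounded_linear by blast
qed

lemma near_id_pos:
  fixes W :: "real^'n^'n" and x :: "real^'n"
  assumes E: "\<And>i j. \<bar>(W - mat 1) $ i $ j\<bar> \<le> c" and c: "real CARD('n) * real CARD('n) * c < 1"
    and x: "x \<noteq> 0"
  shows "x \<bullet> (W *v x) > 0"
proof -
  let ?E = "W - mat 1"
  have on: "onorm ((*v) ?E) \<le> real CARD('n) * real CARD('n) * c"
    using onorm_le_matrix_component[of ?E c] E by blast
  have "\<bar>x \<bullet> (?E *v x)\<bar> \<le> norm x * norm (?E *v x)" by (rule Cauchy_Schwarz_ineq2)
  also have "\<dots> \<le> norm x * (onorm ((*v) ?E) * norm x)"
    by (intro mult_left_mono onorm matrix_vector_mul_bounded_linear) simp_all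
  also have "\<dots> \<le> norm x * ((real CARD('n) * real CARD('n) * c) * norm x)"
    by (intro mult_left_mono mult_right_mono on) simp_all
  also have "\<dots> < norm x * (1 * norm x)"
    using x c by (intro mult_strict_left_mono mult_strict_right_mono) simp_all
  finally have lt: "\<bar>x \<bullet> (?E *v x)\<bar> < x \<bullet> x" by (simp add: power2_norm_eq_inner[symmetric] power2_eq_square)
  have "W *v x = x + ?E *v x" by (simp add: matrix_vector_mult_diff_rdistrib)
  then have "x \<bullet> (W *v x) = x \<bullet> x + x \<bullet> (?E *v x)" by (simp add: inner_add_right)
  with lt show ?thesis by linarith
qed

lemma matrix_inv_props:
  fixes A :: "real^'n^'n"
  assumes "invertible A"
  shows "A ** matrix_inv A = mat 1" "matrix_inv A ** A = mat 1"
proof -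
  have "\<exists>A'. A ** A' = mat 1 \<and> A' ** A = mat 1" using assms by (simp add: invertible_def)
  then have "A ** matrix_inv A = mat 1 \<and> matrix_inv A ** A = mat 1"
    unfolding matrix_inv_def by (rule someI_ex)
  then show "A ** matrix_inv A = mat 1" "matrix_inv A ** A = mat 1" by auto
qed

lemma quad_congr:
  fixes A M :: "real^'n^'n"
  shows "z \<bullet> ((transpose A ** M ** A) *v z) = (A *v z) \<bullet> (M *v (A *v z))"
proof -
  have "z \<bullet> ((transpose A ** M ** A) *v z) = z \<bullet> (transpose A *v (M *v (A *v z)))"
    by (simp add: matrix_vector_mul_assoc matrix_mul_assoc)
  also have "\<dots> = ((M *v (A *v z)) v* A) \<bullet> z" by (simp add: inner_commute)
  also have "\<dots> = (M *v (A *v z)) \<bullet> (A *v z)" by (simp add: dot_lmul_matrix)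
  finally show ?thesis by (simp add: inner_commute)
qed

lemma model_memI:
  fixes L M W :: "real^'v::finite^'v"
  assumes L: "L \<in> RD D" and W: "W \<in> PD B"
    and WM: "W = transpose (mat 1 - L) ** M ** (mat 1 - L)"
  shows "M \<in> model D B"
proof -
  let ?A = "mat 1 - L"
  have pos: "x \<noteq> 0 \<Longrightarrow> x \<bullet> (W *v x) > 0" for x using W by (auto simp: PD_def)
  have "inj ((*v) ?A)"
  proof (rule injI)
    fix x y assume "?A *v x = ?A *v y"
    then have "?A *v (x - y) = 0" by (simp add: matrix_vector_mult_diff_distrib)
    then have "(x - y) \<bullet> (W *v (x - y)) = 0" using quad_congr[of "x - y" ?A M] WM by simp
    then show "x = y" using pos[of "x - y"] by (cases "x - y = 0") auto
  qed
  then have inv: "invertible ?A"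
    using invertible_left_inverse matrix_left_invertible_injective by blast
  let ?Ai = "matrix_inv ?A"
  have "transpose ?Ai ** W ** ?Ai = (transpose ?Ai ** transpose ?A) ** M ** (?A ** ?Ai)"
    by (simp add: WM matrix_mul_assoc)
  also have "\<dots> = M"
    by (simp add: matrix_transpose_mul[symmetric] matrix_inv_props[OF inv] matrix_mul_lid matrix_mul_rid)
  finally have "M = transpose ?Ai ** W ** ?Ai" by simp
  then show ?thesis using L W inv unfolding model_def RD_reg_def by blast
qed

lemma sg_D:
  assumes "simple_mixed_graph D B" "(i,j) \<in> D"
  shows "i \<noteq> j" "(j,i) \<notin> D" "{i,j} \<notin> B" "{j,i} \<notin> B"
  using assms by (auto simp: simple_mixed_graph_def insert_commute)

lemma posn_sym:
  assumes sg: "simple_mixed_graph D B" and rk: "inj rk"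
  shows "posn D rk i j = posn D rk j i"
proof -
  have "rk i = rk j \<Longrightarrow> i = j" using rk by (simp add: inj_eq)
  then show ?thesis using sg_D[OF sg, of i j] sg_D[OF sg, of j i] by (auto simp: posn_def)
qed

lemma Sg_sym:
  assumes sg: "simple_mixed_graph D B" and rk: "inj rk"
  shows "transpose (Sg D rk X) = Sg D rk X"
  using posn_sym[OF sg rk] by (simp add: Sg_def transpose_def vec_eq_iff)

lemma posn_Iset:
  assumes sg: "simple_mixed_graph D B" and "(a,b) \<in> Iset D B rk"
  shows "posn D rk a b = (a,b)"
  using assms(2) sg_D[OF sg, of a b] sg_D[OF sg, of b a]
  by (auto simp: Iset_def posn_def)

lemma C_Iset:
  assumes sg: "simple_mixed_graph D B" and "(a,b) \<in> Cset D B rk"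
  shows "(a,b) \<notin> Iset D B rk"
  using assms(2) sg_D[OF sg, of a b] sg_D[OF sg, of b a]
  by (auto simp: Iset_def Cset_def)

lemma C_off: 
  assumes sg: "simple_mixed_graph D B" and "(a,b) \<in> Cset D B rk"
  shows "a \<noteq> b"
  using assms(2) sg_D[OF sg, of a b] by (auto simp: Cset_def)

lemma pattern_cover:
  assumes rk: "inj rk" and "i \<noteq> j" "{i,j} \<notin> B"
  shows "(i,j) \<in> Cset D B rk \<or> (j,i) \<in> Cset D B rk"
proof -
  have "rk i \<noteq> rk j" using rk assms(2) by (simp add: inj_eq)
  then show ?thesis using assms(2,3) by (auto simp: Cset_def insert_commute)
qed

lemma norm_le_l1_2:
  fixes Y :: "real^'n^'m"
  shows "norm Y \<le> (\<Sum>a\<in>UNIV. \<Sum>b\<in>UNIV. \<bar>Y $ a $ b\<bar>)"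
proof -
  have "norm Y \<le> (\<Sum>a\<in>UNIV. norm (Y $ a))"
    unfolding norm_vec_def by (rule L2_set_le_sum) simp
  also have "\<dots> \<le> (\<Sum>a\<in>UNIV. \<Sum>b\<in>UNIV. \<bar>Y $ a $ b\<bar>)"
    by (intro sum_mono norm_le_l1_cart)
  finally show ?thesis .
qed

lemma Om_mat1:
  assumes "\<forall>(i,j)\<in>D. i \<noteq> j"
  shows "Om D rk (mat 1) = mat 1"
  by (simp add: Om_def Lam_mat1[OF assms] Sg_mat1 matrix_mul_lid matrix_mul_rid)

lemma mat1_PD: "(mat 1 :: real^'v::finite^'v) \<in> PD B"
proof -
  have "x \<noteq> 0 \<Longrightarrow> x \<bullet> ((mat 1::real^'v^'v) *v x) > 0" for x by (simp add: matrix_vector_mul_lid)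
  moreover have "(mat 1::real^'v^'v) $ i $ j = 0" if "i \<noteq> j" for i j using that by (simp add: mat_def)
  ultimately show ?thesis unfolding PD_def by auto
qed

lemma lower_bound:
  fixes D :: "('v::finite \<times> 'v) set"
  assumes sg: "simple_mixed_graph D B" and rk: "inj rk"
  shows "proj_has_interior (model D B) (Iset D B rk)"
proof -
  have irr: "\<forall>(i,j)\<in>D. i \<noteq> j" using sg by (auto simp: simple_mixed_graph_def)
  obtain g' where g': "bounded_linear g'" "FF' D B rk \<circ> g' = id"
    using FF'_right_inverse[OF sg rk] by blast
  define n where "n = real CARD('v)"
  have n1: "n \<ge> 1" unfolding n_def by (simp add: Suc_le_eq)
  define c where "c = 1 / (2 * n * n)"
  have c0: "c > 0" using n1 by (simp add: c_def)
  have nnc: "n * n * c < 1" using n1 by (simp add: c_def)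
  have "isCont (Om D rk) (mat 1)" by (rule Om_continuous)
  then obtain r where r0: "r > 0" and
     r: "\<And>X. dist X (mat 1) < r \<Longrightarrow> dist (Om D rk X) (Om D rk (mat 1)) < c"
    using c0 unfolding continuous_at_eps_delta by blast
  have Omc: "\<bar>(Om D rk X - mat 1) $ i $ j\<bar> \<le> c" if "X \<in> ball (mat 1) r" for X i j
  proof -
    have "\<bar>(Om D rk X - mat 1) $ i $ j\<bar> \<le> norm ((Om D rk X - mat 1) $ i)"
      by (rule component_le_norm_cart)
    also have "\<dots> \<le> norm (Om D rk X - mat 1)" by (rule Finite_Cartesian_Product.norm_nth_le)
    also have "\<dots> < c" using r[of X] that Om_mat1[OF irr, of rk]
      by (simp add: dist_norm norm_minus_commute)
    finally show ?thesis by simp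
  qed
  have contF: "continuous_on UNIV (FF D B rk)"
    by (rule differentiable_imp_continuous_on) (simp add: differentiable_on_def FF_differentiable)
  have "FF D B rk (mat 1) \<in> interior (FF D B rk ` ball (mat 1) r)"
    by (rule sussmann_open_mapping[OF open_UNIV contF _ FF_deriv0[OF irr] g'])
       (use r0 in auto)
  moreover have F1: "FF D B rk (mat 1) = mat 1"
    by (simp add: FF_def Om_mat1[OF irr] vec_eq_iff)
  ultimately obtain \<delta> where \<delta>0: "\<delta> > 0" and \<delta>: "ball (mat 1) \<delta> \<subseteq> FF D B rk ` ball (mat 1) r"
    by (auto simp: mem_interior)
  define e where "e = \<delta> / (2 * n * n)"
  have e0: "e > 0" using \<delta>0 n1 by (simp add: e_def)
  have M0: "mat 1 \<in> model D B"
    by (rule model_memI[of 0 D "mat 1" B]) (auto simp: RD_def mat1_PD matrix_mul_lid matrix_mul_rid)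
  show ?thesis unfolding proj_has_interior_def
  proof (rule bexI[OF _ M0], rule exI[of _ e], intro conjI e0 allI impI)
    fix f :: "'v \<times> 'v \<Rightarrow> real"
    assume f: "\<forall>k\<in>Iset D B rk. \<bar>f k - mat 1 $ fst k $ snd k\<bar> < e"
    define Y :: "real^'v^'v" where "Y = (\<chi> a b. if (a,b) \<in> Iset D B rk then f (a,b) else mat 1 $ a $ b)"
    have "norm (Y - mat 1) \<le> (\<Sum>a\<in>UNIV. \<Sum>b\<in>UNIV. \<bar>(Y - mat 1) $ a $ b\<bar>)" by (rule norm_le_l1_2)
    also have "\<dots> \<le> (\<Sum>a\<in>(UNIV::'v set). \<Sum>b\<in>(UNIV::'v set). e)"
      using f e0 by (intro sum_mono) (auto simp: Y_def less_imp_le)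
    also have "\<dots> = n * n * e" by (simp add: n_def)
    also have "\<dots> = \<delta> / 2" using n1 by (simp add: e_def)
    finally have "Y \<in> ball (mat 1) \<delta>" using \<delta>0 by (simp add: dist_norm norm_minus_commute)
    then obtain X where X: "X \<in> ball (mat 1) r" and FX: "FF D B rk X = Y" using \<delta> by blast
    have FXc: "FF D B rk X $ i $ j = Y $ i $ j" for i j using FX by simp
    let ?W = "Om D rk X"
    have Wsym: "transpose ?W = ?W"
      by (simp add: Om_def matrix_transpose_mul Sg_sym[OF sg rk] matrix_mul_assoc)
    have Wpos: "x \<bullet> (?W *v x) > 0" if "x \<noteq> 0" for x
      using near_id_pos[of ?W c x] Omc[OF X] nnc that by (simp add: n_def)
    have WC: "?W $ i $ j = 0" if "(i,j) \<in> Cset D B rk" for i j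
    proof -
      have "?W $ i $ j = Y $ i $ j" using FXc[of i j] that by (simp add: FF_def)
      also have "\<dots> = 0" using C_Iset[OF sg that] C_off[OF sg that] by (simp add: Y_def mat_def)
      finally show ?thesis .
    qed
    have Wpat: "?W $ i $ j = 0" if "i \<noteq> j" "{i,j} \<notin> B" for i j
    proof -
      have "?W $ i $ j = ?W $ j $ i" using Wsym by (metis transpose_def vec_lambda_beta)
      then show ?thesis using pattern_cover[OF rk that] WC by metis
    qed
    have WPD: "?W \<in> PD B" using Wsym Wpos Wpat unfolding PD_def by blast
    have LRD: "Lam D X \<in> RD D" by (simp add: RD_def Lam_def)
    have Mm: "Sg D rk X \<in> model D B"
      by (rule model_memI[OF LRD WPD]) (simp add: Om_def)
    have "Sg D rk X $ a $ b = f (a,b)" if "(a,b) \<in> Iset D B rk" for a b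
    proof -
      have "Sg D rk X $ a $ b = X $ a $ b" using posn_Iset[OF sg that] by (simp add: Sg_def)
      also have "\<dots> = FF D B rk X $ a $ b"
        using C_Iset[OF sg] that by (auto simp: FF_def)
      also have "\<dots> = f (a,b)" using FXc[of a b] that by (simp add: Y_def)
      finally show ?thesis .
    qed
    then show "\<exists>M\<in>model D B. \<forall>k\<in>Iset D B rk. M $ fst k $ snd k = f k"
      using Mm by force
  qed
qed

lemma card_Iset:
  fixes D :: "('v::finite \<times> 'v) set"
  assumes sg: "simple_mixed_graph D B" and rk: "inj rk"
  shows "card (Iset D B rk) = CARD('v) + card D + card B"
proof -
  define Dg where "Dg = {(i,i) | i::'v. True}"
  define Df where "Df = {(j,i) | i j. (i,j) \<in> D}"
  define Bo where "Bo = {(i,j). {i,j} \<in> B \<and> rk i < rk j}"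
  have I: "Iset D B rk = Dg \<union> Df \<union> Bo" by (simp add: Iset_def Dg_def Df_def Bo_def)
  have d1: "Dg \<inter> Df = {}" using sg_D[OF sg] by (auto simp: Dg_def Df_def)
  have d2: "(Dg \<union> Df) \<inter> Bo = {}" using sg_D[OF sg] by (auto simp: Dg_def Df_def Bo_def)
  have c1: "card Dg = CARD('v)"
  proof -
    have "Dg = (\<lambda>i. (i,i)) ` UNIV" by (auto simp: Dg_def)
    moreover have "inj (\<lambda>i::'v. (i,i))" by (auto intro: injI)
    ultimately show ?thesis by (simp add: card_image)
  qed
  have c2: "card Df = card D"
  proof -
    have "Df = (\<lambda>(i,j). (j,i)) ` D" by (auto simp: Df_def)
    moreover have "inj_on (\<lambda>(i,j). (j,i)) D" by (auto intro: inj_onI)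
    ultimately show ?thesis by (simp add: card_image)
  qed
  have c3: "card Bo = card B"
  proof -
    have "bij_betw (\<lambda>(i,j). {i,j}) Bo B"
    proof (rule bij_betw_imageI)
      show "inj_on (\<lambda>(i,j). {i,j}) Bo"
        by (auto simp: Bo_def inj_on_def doubleton_eq_iff)
      show "(\<lambda>(i,j). {i,j}) ` Bo = B"
      proof
        show "(\<lambda>(i,j). {i,j}) ` Bo \<subseteq> B" by (auto simp: Bo_def)
        show "B \<subseteq> (\<lambda>(i,j). {i,j}) ` Bo"
        proof
          fix e assume e: "e \<in> B"
          then obtain i j where ij: "i \<noteq> j" "e = {i,j}" using sg by (auto simp: simple_mixed_graph_def)
          have "rk i \<noteq> rk j" using rk ij(1) by (simp add: inj_eq)
          then have "rk i < rk j \<or> rk j < rk i" by arith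
          then show "e \<in> (\<lambda>(i,j). {i,j}) ` Bo"
          proof
            assume "rk i < rk j" then show ?thesis using e ij by (force simp: Bo_def)
          next
            assume "rk j < rk i"
            then have "(j,i) \<in> Bo" using e ij by (simp add: Bo_def insert_commute)
            then show ?thesis using ij by (force simp: insert_commute)
          qed
        qed
      qed
    qed
    then show ?thesis by (rule bij_betw_same_card)
  qed
  have "card (Dg \<union> Df \<union> Bo) = card (Dg \<union> Df) + card Bo"
    using d2 by (intro card_Un_disjoint) auto
  also have "card (Dg \<union> Df) = card Dg + card Df"
    using d1 by (intro card_Un_disjoint) auto
  finally show ?thesis using I c1 c2 c3 by simp
qed

definition Qi :: "real^'n^'n \<Rightarrow> real^'n^'n" where
  "Qi A = (\<chi> i k. det (\<chi> r c. if c = i then (if r = k then 1 else 0) else A $ r $ c) / det A)"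

lemma matrix_inv_Qi:
  fixes A :: "real^'n^'n"
  assumes inv: "invertible A"
  shows "matrix_inv A = Qi A"
proof -
  have d: "det A \<noteq> 0" using inv invertible_det_nz by blast
  have AA: "A ** matrix_inv A = mat 1" using matrix_inv_props[OF inv] by simp
  have "matrix_inv A $ i $ k = Qi A $ i $ k" for i k
  proof -
    define x where "x = (\<chi> i. matrix_inv A $ i $ k)"
    define b :: "real^'n" where "b = (\<chi> r. if r = k then 1 else 0)"
    have "A *v x = b"
    proof -
      have "(A *v x) $ r = (A ** matrix_inv A) $ r $ k" for r
        by (simp add: x_def matrix_vector_mult_def matrix_matrix_mult_def)
      then show ?thesis using AA by (simp add: b_def vec_eq_iff mat_def)
    qed
    then have "x = (\<chi> k. det(\<chi> i j. if j=k then b$i else A$i$j) / det A)"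
      using cramer[OF d] by blast
    then have "x $ i = det(\<chi> r c. if c = i then b $ r else A $ r $ c) / det A" by simp
    also have "(\<chi> r c. if c = i then b $ r else A $ r $ c) = (\<chi> r c. if c = i then (if r = k then 1 else 0) else A $ r $ c)"
      unfolding b_def by (simp add: vec_eq_iff)
    finally show ?thesis by (simp add: x_def Qi_def)
  qed
  then show ?thesis by (simp add: vec_eq_iff)
qed

lemma rpf_entry: "real_polynomial_function (\<lambda>X::real^'n^'m. X $ i $ j)"
  by (rule real_polynomial_function.intros(1))
     (rule bounded_linear_compose[OF bounded_linear_vec_nth bounded_linear_vec_nth])

lemma rpf_det:
  fixes G :: "'a::real_normed_vector \<Rightarrow> real^'n^'n"
  assumes "\<And>r c. real_polynomial_function (\<lambda>x. G x $ r $ c)"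
  shows "real_polynomial_function (\<lambda>x. det (G x))"
  unfolding det_def
  by (intro real_polynomial_function_sum real_polynomial_function.intros(4)
        real_polynomial_function.intros(2) real_polynomial_function_prod assms) auto

lemma Qi_differentiable:
  fixes G :: "'a::real_normed_vector \<Rightarrow> real^'n^'n"
  assumes G: "\<And>r c. real_polynomial_function (\<lambda>x. G x $ r $ c)" and d: "det (G x0) \<noteq> 0"
  shows "(\<lambda>x. Qi (G x)) differentiable (at x0 within S)"
proof (rule vec2_differentiable)
  fix i k
  have num: "real_polynomial_function (\<lambda>x. det (\<chi> r c. if c = i then (if r = k then 1 else 0) else G x $ r $ c))"
  proof (rule rpf_det)
    fix r c
    show "real_polynomial_function (\<lambda>x. (\<chi> r c. if c = i then (if r = k then 1 else 0) else G x $ r $ c) $ r $ c)"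
      by (cases "c = i") (simp_all add: G real_polynomial_function.intros(2))
  qed
  show "(\<lambda>x. Qi (G x) $ i $ k) differentiable (at x0 within S)"
    unfolding Qi_def vec_lambda_beta
    by (intro differentiable_divide differentiable_at_real_polynomial_function num rpf_det G d)
qed

lemma mm_differentiable:
  fixes f :: "'a::real_normed_vector \<Rightarrow> real^'k^'m" and g :: "'a \<Rightarrow> real^'n^'k"
  assumes "f differentiable (at a within S)" "g differentiable (at a within S)"
  shows "(\<lambda>x. f x ** g x) differentiable (at a within S)"
  using assms mm_has_derivative unfolding differentiable_def by blast

lemma transpose_differentiable:
  fixes f :: "'a::real_normed_vector \<Rightarrow> real^'n^'m"
  assumes "f differentiable (at a within S)"
  shows "(\<lambda>x. transpose (f x)) differentiable (at a within S)"
  using assms transpose_has_derivative unfolding differentiable_def by blast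

definition Wp :: "'v set set \<Rightarrow> ('v \<Rightarrow> nat) \<Rightarrow> real^'v::finite^'v \<Rightarrow> real^'v^'v" where
  "Wp B rk X = (\<chi> i j. if i = j then X $ i $ i else if {i,j} \<in> B \<and> rk i < rk j then X $ i $ j
      else if {i,j} \<in> B \<and> rk j < rk i then X $ j $ i else 0)"

definition hh :: "('v \<times> 'v) set \<Rightarrow> 'v set set \<Rightarrow> ('v \<Rightarrow> nat) \<Rightarrow> real^'v::finite^'v \<Rightarrow> real^'v^'v" where
  "hh D B rk X = transpose (Qi (mat 1 - Lam D X)) ** Wp B rk X ** Qi (mat 1 - Lam D X)"

lemma Wp_differentiable: "Wp B rk differentiable (at a within S)"
proof (rule vec2_differentiable)
  fix i j
  show "(\<lambda>x. Wp B rk x $ i $ j) differentiable (at a within S)"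
    unfolding Wp_def vec_lambda_beta
    by (cases "i = j"; cases "{i,j} \<in> B"; cases "rk i < rk j"; cases "rk j < rk i")
       (simp_all add: differentiable_at_real_polynomial_function rpf_entry)
qed

lemma rpf_A: "real_polynomial_function (\<lambda>X. (mat 1 - Lam D X) $ r $ c)"
  by (cases "(r,c) \<in> D") (simp_all add: Lam_def rpf_entry real_polynomial_function_diff real_polynomial_function.intros(2))

lemma hh_differentiable:
  assumes "det (mat 1 - Lam D X) \<noteq> 0"
  shows "hh D B rk differentiable (at X within S)"
proof -
  have Q: "(\<lambda>x. Qi (mat 1 - Lam D x)) differentiable (at X within S)"
    by (rule Qi_differentiable[OF rpf_A assms])
  show ?thesis unfolding hh_def[abs_def]
    by (intro mm_differentiable transpose_differentiable Q Wp_differentiable)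
qed



definition Kset :: "('v \<times> 'v) set \<Rightarrow> 'v set set \<Rightarrow> ('v \<Rightarrow> nat) \<Rightarrow> ('v \<times> 'v) set" where
  "Kset D B rk = D \<union> {(i,i) | i. True} \<union> {(i,j). {i,j} \<in> B \<and> rk i < rk j}"

definition Pm :: "('v \<times> 'v) set \<Rightarrow> 'v set set \<Rightarrow> ('v \<Rightarrow> nat) \<Rightarrow> real^'v::finite^'v \<Rightarrow> real^'v^'v \<Rightarrow> real^'v^'v" where
  "Pm D B rk L W = (\<chi> i j. if (i,j) \<in> D then L $ i $ j else if i = j \<or> ({i,j} \<in> B \<and> rk i < rk j) then W $ i $ j else 0)"

lemma Pm_supp: "(i,j) \<notin> Kset D B rk \<Longrightarrow> Pm D B rk L W $ i $ j = 0"
  by (auto simp: Kset_def Pm_def)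

lemma Pm_props:
  fixes D :: "('v::finite \<times> 'v) set"
  assumes sg: "simple_mixed_graph D B" and rk: "inj rk" and L: "L \<in> RD_reg D" and W: "W \<in> PD B"
  shows "Lam D (Pm D B rk L W) = L"
    and "hh D B rk (Pm D B rk L W) = transpose (matrix_inv (mat 1 - L)) ** W ** matrix_inv (mat 1 - L)"
proof -
  have L0: "L $ i $ j = 0" if "(i,j) \<notin> D" for i j using L that by (auto simp: RD_reg_def RD_def)
  have inv: "invertible (mat 1 - L)" using L by (simp add: RD_reg_def)
  have Wsym: "W $ i $ j = W $ j $ i" for i j
  proof -
    have T: "transpose W = W" using W by (simp add: PD_def)
    have "transpose W $ j $ i = W $ j $ i" using T by simp
    then show ?thesis by (simp add: transpose_def)
  qed
  have Wpat: "W $ i $ j = 0" if "i \<noteq> j" "{i,j} \<notin> B" for i j using W that by (auto simp: PD_def)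
  show LP: "Lam D (Pm D B rk L W) = L"
    by (auto simp: Lam_def Pm_def vec_eq_iff L0)
  have "Wp B rk (Pm D B rk L W) $ i $ j = W $ i $ j" for i j
  proof -
    have ne: "rk i = rk j \<Longrightarrow> i = j" using rk by (simp add: inj_eq)
    consider "i = j" | "i \<noteq> j" "{i,j} \<notin> B" | "i \<noteq> j" "{i,j} \<in> B" "rk i < rk j"
      | "i \<noteq> j" "{i,j} \<in> B" "rk j < rk i"
      by (cases "rk i < rk j"; cases "rk j < rk i") (use ne in auto)
    then show ?thesis
    proof cases
      case 1
      have "(i,i) \<notin> D" using sg_D(1)[OF sg, of i i] by blast
      then show ?thesis using 1 by (simp add: Wp_def Pm_def)
    next
      case 2
      then show ?thesis using Wpat[of i j] by (simp add: Wp_def)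
    next
      case 3
      have "(i,j) \<notin> D" using sg_D(3)[OF sg, of i j] 3 by blast
      then show ?thesis using 3 by (simp add: Wp_def Pm_def)
    next
      case 4
      have "(j,i) \<notin> D" using sg_D(4)[OF sg, of j i] 4 by blast
      moreover have "{j,i} \<in> B" using 4 by (simp add: insert_commute)
      ultimately show ?thesis using 4 Wsym[of i j] by (simp add: Wp_def Pm_def)
    qed
  qed
  then have "Wp B rk (Pm D B rk L W) = W" by (simp add: vec_eq_iff)
  then show "hh D B rk (Pm D B rk L W) = transpose (matrix_inv (mat 1 - L)) ** W ** matrix_inv (mat 1 - L)"
    by (simp add: hh_def LP matrix_inv_Qi[OF inv])
qed

lemma card_Dg: "card {(i,i) | i::'v::finite. True} = CARD('v)"
proof -
  have "{(i,i) | i::'v. True} = (\<lambda>i. (i,i)) ` UNIV" by auto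
  moreover have "inj (\<lambda>i::'v. (i,i))" by (auto intro: injI)
  ultimately show ?thesis by (simp add: card_image)
qed

lemma card_Bo_le:
  fixes B :: "'v::finite set set" and rk :: "'v \<Rightarrow> nat"
  shows "card {(i,j). {i,j} \<in> B \<and> rk i < rk j} \<le> card B"
proof -
  let ?Bo = "{(i::'v,j). {i,j} \<in> B \<and> rk i < rk j}"
  have "inj_on (\<lambda>(i,j). {i,j}) ?Bo"
  proof (rule inj_onI, clarify)
    fix a b c d assume "{a,b} = {c,d}" "rk a < rk b" "rk c < rk d"
    then show "a = c \<and> b = d" unfolding doubleton_eq_iff by auto
  qed
  moreover have "(\<lambda>(i,j). {i,j}) ` ?Bo \<subseteq> B" by auto
  ultimately show ?thesis by (rule card_inj_on_le[OF _ _ finite])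
qed

lemma card_Kset:
  fixes D :: "('v::finite \<times> 'v) set"
  shows "card (Kset D B rk) \<le> CARD('v) + card D + card B"
proof -
  have "card (Kset D B rk) \<le> card (D \<union> {(i,i) | i. True}) + card {(i,j). {i,j} \<in> B \<and> rk i < rk j}"
    unfolding Kset_def by (rule card_Un_le)
  also have "\<dots> \<le> card D + card {(i,i) | i::'v. True} + card B"
    by (intro add_mono card_Un_le card_Bo_le)
  finally show ?thesis using card_Dg[where 'v='v] by simp
qed

lemma comp2_differentiable:
  fixes f :: "'a::real_normed_vector \<Rightarrow> real^'n^'m"
  assumes "f differentiable F"
  shows "(\<lambda>x. f x $ i $ j) differentiable F"
  using assms comp2_has_derivative unfolding differentiable_def by blast

lemma upper_bound:
  fixes D :: "('v::finite \<times> 'v) set" and rk :: "'v \<Rightarrow> nat"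
  assumes sg: "simple_mixed_graph D B" and rk: "inj rk" and P: "proj_has_interior (model D B) J"
  shows "card J \<le> CARD('v) + card D + card B"
proof (rule ccontr)
  assume nt: "\<not> ?thesis"
  define K where "K = Kset D B rk"
  have lt: "card K < card J" using card_Kset[of D B rk] nt by (simp add: K_def)
  obtain \<pi> where \<pi>K: "\<pi> ` K \<subseteq> J" and \<pi>inj: "inj_on \<pi> K"
    using card_le_inj[of K J] lt by auto
  define pull :: "real^'v^'v \<Rightarrow> real^'v^'v" where
    "pull X = (\<chi> i j. if (i,j) \<in> K then X $ fst (\<pi> (i,j)) $ snd (\<pi> (i,j)) else 0)" for X
  define Supp where "Supp = \<pi> ` K \<union> - J"
  define U where "U = {X::real^'v^'v. (\<forall>a b. (a,b) \<notin> Supp \<longrightarrow> X $ a $ b = 0) \<and> det (mat 1 - Lam D (pull X)) \<noteq> 0}"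
  define g where "g X = (\<chi> i j. if (i,j) \<in> J then hh D B rk (pull X) $ i $ j else X $ i $ j)" for X
  define Wb where "Wb = (\<lambda>(a,b). axis a (axis b (1::real)) :: real^'v^'v) ` Supp"
  have span: "U \<subseteq> span Wb"
  proof
    fix X assume X: "X \<in> U"
    have "X = (\<Sum>u\<in>Basis. (X \<bullet> u) *\<^sub>R u)" by (rule euclidean_representation[symmetric])
    also have "\<dots> \<in> span Wb"
    proof (rule span_sum)
      fix u :: "real^'v^'v" assume "u \<in> Basis"
      then obtain a b where u: "u = axis a (axis b 1)" by (auto simp: Basis_vec_def)
      show "(X \<bullet> u) *\<^sub>R u \<in> span Wb"
      proof (cases "(a,b) \<in> Supp")
        case True then have "u \<in> Wb" using u by (force simp: Wb_def)
        then show ?thesis by (intro span_mul span_base)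
      next
        case False then have "X \<bullet> u = 0" using X u by (simp add: U_def inner_axis)
        then show ?thesis by (simp add: span_zero)
      qed
    qed
    finally show "X \<in> span Wb" .
  qed
  have cJ: "card (- J) = CARD('v) * CARD('v) - card J"
  proof -
    have "card (- J) = card (UNIV::('v\<times>'v) set) - card J"
      by (simp add: Compl_eq_Diff_UNIV card_Diff_subset)
    also have "card (UNIV::('v\<times>'v) set) = CARD('v) * CARD('v)"
      by (simp add: UNIV_Times_UNIV[symmetric] card_cartesian_product del: UNIV_Times_UNIV)
    finally show ?thesis .
  qed
  have cJle: "card J \<le> CARD('v) * CARD('v)"
  proof -
    have "card J \<le> card (UNIV::('v\<times>'v) set)" by (rule card_mono) simp_all
    also have "card (UNIV::('v\<times>'v) set) = CARD('v) * CARD('v)"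
      by (simp add: UNIV_Times_UNIV[symmetric] card_cartesian_product del: UNIV_Times_UNIV)
    finally show ?thesis .
  qed
  have "dim U \<le> card Wb" by (rule dim_le_card[OF span]) (simp add: Wb_def)
  also have "card Wb \<le> card Supp" unfolding Wb_def by (rule card_image_le) simp
  also have "card Supp \<le> card (\<pi> ` K) + card (- J)" unfolding Supp_def by (rule card_Un_le)
  also have "card (\<pi> ` K) \<le> card K" by (rule card_image_le) simp
  finally have dU: "dim U \<le> card K + card (- J)" by simp
  have "DIM(real^'v^'v) = CARD('v) * CARD('v)" by (simp add: DIM_cart)
  then have "dim U < DIM(real^'v^'v)" using dU lt cJ cJle by linarith
  then have negU: "negligible U" by (rule negligible_lowdim)
  have pull_diff: "pull differentiable (at X within S)" for X S
  proof (rule vec2_differentiable)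
    fix i j
    show "(\<lambda>x. pull x $ i $ j) differentiable (at X within S)"
      by (cases "(i,j) \<in> K") (simp_all add: pull_def differentiable_at_real_polynomial_function rpf_entry)
  qed
  have g_diff: "g differentiable_on U"
    unfolding differentiable_on_def
  proof
    fix X assume X: "X \<in> U"
    then have dX: "det (mat 1 - Lam D (pull X)) \<noteq> 0" by (simp add: U_def)
    have hp: "(hh D B rk \<circ> pull) differentiable (at X within U)"
      by (rule differentiable_chain_within[OF pull_diff hh_differentiable[OF dX]])
    show "g differentiable (at X within U)"
    proof (rule vec2_differentiable)
      fix i j
      show "(\<lambda>x. g x $ i $ j) differentiable (at X within U)"
      proof (cases "(i,j) \<in> J")
        case True
        then show ?thesis using comp2_differentiable[OF hp, of i j] by (simp add: g_def o_def)
      next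
        case False
        then show ?thesis
          by (simp add: g_def differentiable_at_real_polynomial_function rpf_entry)
      qed
    qed
  qed
  have neg: "negligible (g ` U)"
    by (rule negligible_differentiable_image_negligible[OF order_refl negU g_diff])
  from P obtain M0 e where M0: "M0 \<in> model D B" and e0: "e > 0" and
    H: "\<And>f. (\<forall>k\<in>J. \<bar>f k - M0 $ fst k $ snd k\<bar> < e) \<Longrightarrow> (\<exists>M\<in>model D B. \<forall>k\<in>J. M $ fst k $ snd k = f k)"
    unfolding proj_has_interior_def by blast
  have "ball M0 e \<subseteq> g ` U"
  proof
    fix Y assume Y: "Y \<in> ball M0 e"
    have "\<bar>Y $ a $ b - M0 $ a $ b\<bar> < e" for a b
    proof -
      have "\<bar>(Y - M0) $ a $ b\<bar> \<le> norm ((Y - M0) $ a)" by (rule component_le_norm_cart)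
      also have "\<dots> \<le> norm (Y - M0)" by (rule Finite_Cartesian_Product.norm_nth_le)
      also have "\<dots> < e" using Y by (simp add: dist_norm norm_minus_commute)
      finally show ?thesis by simp
    qed
    then obtain M where M: "M \<in> model D B" and MY: "\<forall>k\<in>J. M $ fst k $ snd k = Y $ fst k $ snd k"
      using H[of "\<lambda>k. Y $ fst k $ snd k"] by blast
    from M obtain L W where L: "L \<in> RD_reg D" and W: "W \<in> PD B"
      and Meq: "M = transpose (matrix_inv (mat 1 - L)) ** W ** matrix_inv (mat 1 - L)"
      unfolding model_def by blast
    define P where "P = Pm D B rk L W"
    define X where "X = (\<chi> a b. if (a,b) \<in> \<pi> ` K then P $ fst (inv_into K \<pi> (a,b)) $ snd (inv_into K \<pi> (a,b))
        else if (a,b) \<notin> J then Y $ a $ b else 0)"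
    have "pull X $ i $ j = P $ i $ j" for i j
    proof (cases "(i,j) \<in> K")
      case True
      then have "\<pi> (i,j) \<in> \<pi> ` K" by simp
      moreover have "inv_into K \<pi> (\<pi> (i,j)) = (i,j)" by (rule inv_into_f_f[OF \<pi>inj True])
      ultimately show ?thesis using True by (simp add: pull_def X_def)
    next
      case False
      then show ?thesis using Pm_supp[of i j D B rk L W] by (simp add: pull_def P_def K_def)
    qed
    then have pX: "pull X = P" by (simp add: vec_eq_iff)
    have LP: "Lam D P = L" unfolding P_def by (rule Pm_props(1)[OF sg rk L W])
    have hP: "hh D B rk P = M" unfolding P_def Meq by (rule Pm_props(2)[OF sg rk L W])
    have inv: "invertible (mat 1 - L)" using L by (simp add: RD_reg_def)
    have dX: "det (mat 1 - Lam D (pull X)) \<noteq> 0" using inv by (simp add: pX LP invertible_det_nz)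
    have "X $ a $ b = 0" if "(a,b) \<notin> Supp" for a b
      using that by (simp add: Supp_def X_def)
    then have XU: "X \<in> U" using dX by (simp add: U_def)
    have "g X = Y"
    proof -
      have "g X $ i $ j = Y $ i $ j" for i j
      proof (cases "(i,j) \<in> J")
        case True
        then show ?thesis using MY by (auto simp: g_def pX hP)
      next
        case False
        then have "(i,j) \<notin> \<pi> ` K" using \<pi>K by blast
        then show ?thesis using False by (simp add: g_def X_def)
      qed
      then show ?thesis by (simp add: vec_eq_iff)
    qed
    then show "Y \<in> g ` U" using XU by blast
  qed
  then have "negligible (ball M0 e)" using neg negligible_subset by blast
  moreover have "ball M0 e \<noteq> {}" using e0 by simp
  ultimately show False using open_not_negligible[OF open_ball] by blast
qed

theorem theorem1:
  fixes D :: "('v::finite \<times> 'v) set" and B :: "'v set set"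
  assumes "simple_mixed_graph D B"
  shows "sa_dim (model D B) = CARD('v) + card D + card B"
proof -
  obtain rk :: "'v \<Rightarrow> nat" where rk: "inj rk"
    using finite_imp_inj_to_nat_seg[of "UNIV::'v set"] by auto
  show ?thesis unfolding sa_dim_def
  proof (rule Greatest_equality)
    show "\<exists>I. card I = CARD('v) + card D + card B \<and> proj_has_interior (model D B) I"
      using card_Iset[OF assms rk] lower_bound[OF assms rk] by blast
  next
    fix y assume "\<exists>I. card I = y \<and> proj_has_interior (model D B) I"
    then show "y \<le> CARD('v) + card D + card B" using upper_bound[OF assms rk] by blast
  qed
qed

end
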